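(* Let $p>q\ge1$ be coprime integers such that $\frac pq=[a_1,\dots,a_h]$ with $a_1,\dots,a_h\ge5$. Then $\mathbf Z_{p,q}=\{(1,2,\dots,2,1)\}$.
   Context: $[c_1,\dots,c_k]=c_1-\cfrac{1}{c_2-\cfrac{1}{\ddots-\cfrac1{c_k}}}$. A $k$-tuple of non-negative integers $(n_1,\dots,n_k)$ is admissible if $[n_j,\dots,n_k]>0$ for $j=2,\dots,k$ (all denominators in the continued fraction are positive). Write $\frac{p}{p-q}=[b_1,\dots,b_k]$ with all $b_i\ge2$ (uniquely). $\mathbf Z_{p,q}\subset\mathbb Z^k$ is the set of admissible $k$-tuples of non-negative integers $(n_1,\dots,n_k)$ with $[n_1,\dots,n_k]=0$ and $0\le n_i\le b_i$ for $i=1,\dots,k$. The tuple $(1,2,\dots,2,1)$ has length $k$. *)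

theory Defs
  imports Complex_Main
begin

text \<open>Hirzebruch--Jung continued fraction
  [c_1,...,c_k] = c_1 - 1/(c_2 - 1/(... - 1/c_k)), over the rationals.
  The value on the empty list is an irrelevant default.\<close>
fun hjcf :: "int list \<Rightarrow> rat" where
  "hjcf [] = 0"
| "hjcf [c] = of_int c"
| "hjcf (c # d # cs) = of_int c - 1 / hjcf (d # cs)"

definition admissible :: "int list \<Rightarrow> bool" where
  "admissible ns \<longleftrightarrow> (\<forall>i. 1 \<le> i \<and> i < length ns \<longrightarrow> hjcf (drop i ns) > 0)"

definition hj_b :: "int \<Rightarrow> int \<Rightarrow> int list" where
  "hj_b p q = (THE bs. bs \<noteq> [] \<and> (\<forall>b\<in>set bs. b \<ge> 2) \<and>
                       hjcf bs = of_int p / of_int (p - q))"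

definition Z_set :: "int \<Rightarrow> int \<Rightarrow> int list set" where
  "Z_set p q = {ns. length ns = length (hj_b p q) \<and> (\<forall>n\<in>set ns. n \<ge> 0) \<and>
                    admissible ns \<and> hjcf ns = 0 \<and>
                    (\<forall>i < length ns. ns ! i \<le> hj_b p q ! i)}"

definition one_twos_one :: "nat \<Rightarrow> int list" where
  "one_twos_one k = map (\<lambda>i. if i = 0 \<or> i = k - 1 then 1 else 2) [0..<k]"

end

theory Submission
  imports Defs
begin


lemma hjcf_cons: "xs \<noteq> [] \<Longrightarrow> hjcf (c # xs) = of_int c - 1 / hjcf xs"
  by (cases xs) auto

lemma hjcf_gt1: "xs \<noteq> [] \<Longrightarrow> \<forall>x\<in>set xs. x \<ge> 2 \<Longrightarrow> hjcf xs > 1"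
proof (induction xs)
  case Nil then show ?case by simp
next
  case (Cons c xs)
  show ?case
  proof (cases "xs = []")
    case True then show ?thesis using Cons by simp
  next
    case False
    then have v: "hjcf xs > 1" using Cons by simp
    have "1 / hjcf xs < 1" using v by simp
    moreover have "(of_int c::rat) \<ge> 2" using Cons by simp
    ultimately show ?thesis using False by (simp add: hjcf_cons)
  qed
qed

lemma hjcf_unique:
  "xs \<noteq> [] \<Longrightarrow> \<forall>x\<in>set xs. x \<ge> 2 \<Longrightarrow> ys \<noteq> [] \<Longrightarrow> \<forall>x\<in>set ys. x \<ge> 2
   \<Longrightarrow> hjcf xs = hjcf ys \<Longrightarrow> xs = ys"
proof (induction xs arbitrary: ys)
  case Nil then show ?case by simp
next
  case (Cons c xs)
  obtain d ys' where ys: "ys = d # ys'" using Cons by (cases ys) auto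
  show ?case
  proof (cases "xs = []")
    case True
    show ?thesis
    proof (cases "ys' = []")
      case True then show ?thesis using Cons ys \<open>xs = []\<close> by simp
    next
      case False
      have v: "hjcf ys' > 1" using Cons ys False hjcf_gt1 by simp
      have e: "(of_int c::rat) = of_int d - 1 / hjcf ys'" using Cons ys False \<open>xs = []\<close> by (simp add: hjcf_cons)
      have "0 < 1 / hjcf ys'" "1 / hjcf ys' < 1" using v by auto
      then have "(of_int d - 1::rat) < of_int c" "(of_int c::rat) < of_int d" using e by linarith+
      then have "d - 1 < c" "c < d" by linarith+
      then show ?thesis by simp
    qed
  next
    case False
    show ?thesis
    proof (cases "ys' = []")
      case True
      have v: "hjcf xs > 1" using Cons False hjcf_gt1 by simp
      have e: "(of_int d::rat) = of_int c - 1 / hjcf xs" using Cons ys False True by (simp add: hjcf_cons)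
      have "0 < 1 / hjcf xs" "1 / hjcf xs < 1" using v by auto
      then have "(of_int c - 1::rat) < of_int d" "(of_int d::rat) < of_int c" using e by linarith+
      then have "c - 1 < d" "d < c" by linarith+
      then show ?thesis by simp
    next
      case ne: False
      have v: "hjcf xs > 1" using Cons False hjcf_gt1 by simp
      have w: "hjcf ys' > 1" using Cons ys ne hjcf_gt1 by simp
      have e: "(of_int c::rat) - 1 / hjcf xs = of_int d - 1 / hjcf ys'" using Cons ys False ne by (simp add: hjcf_cons)
      have "0 < 1 / hjcf xs" "1 / hjcf xs < 1" "0 < 1 / hjcf ys'" "1 / hjcf ys' < 1" using v w by auto
      then have "(of_int c - 1::rat) < of_int d" "(of_int d - 1::rat) < of_int c" using e by linarith+
      then have "c - 1 < d" "d - 1 < c" by linarith+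
      then have cd: "c = d" by simp
      then have "hjcf xs = hjcf ys'" using e by simp
      then have "xs = ys'" using Cons.IH[of ys'] False ne Cons.prems ys by simp
      then show ?thesis using cd ys by simp
    qed
  qed
qed

fun inc_hd :: "int list \<Rightarrow> int list" where
  "inc_hd [] = []"
| "inc_hd (x # xs) = (x + 1) # xs"

fun dual :: "int list \<Rightarrow> int list" where
  "dual [] = []"
| "dual [a] = replicate (nat (a - 1)) 2"
| "dual (a # b # cs) = replicate (nat (a - 2)) 2 @ inc_hd (dual (b # cs))"

lemma hjcf_inc_hd: "xs \<noteq> [] \<Longrightarrow> hjcf (inc_hd xs) = hjcf xs + 1"
  by (cases xs rule: hjcf.cases) auto

lemma hjcf_rep2:
  assumes "ys \<noteq> []" "hjcf ys \<ge> 1"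
  shows "hjcf (replicate m 2 @ ys) =
    ((of_nat m + 1) * hjcf ys - of_nat m) / (of_nat m * (hjcf ys - 1) + 1)"
proof (induction m)
  case 0 then show ?case by simp
next
  case (Suc m)
  define y where "y = hjcf ys"
  have y: "y \<ge> 1" using assms y_def by simp
  have ne: "replicate m 2 @ ys \<noteq> []" using assms by simp
  have d1: "(of_nat m + 1) * y - of_nat m > 0"
  proof -
    have "(of_nat m + 1) * y - of_nat m = (of_nat m + 1) * (y - 1) + 1" by (simp add: algebra_simps)
    moreover have "(of_nat m + 1) * (y - 1) \<ge> 0" using y by simp
    ultimately show ?thesis by linarith
  qed
  have "of_nat m * (y - 1) \<ge> (0::rat)" using y by simp
  then have d2: "of_nat m * (y - 1) + 1 > (0::rat)" by linarith
  have "hjcf (replicate (Suc m) 2 @ ys) = 2 - 1 / hjcf (replicate m 2 @ ys)"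
    using ne by (simp add: hjcf_cons)
  also have "\<dots> = 2 - (of_nat m * (y - 1) + 1) / ((of_nat m + 1) * y - of_nat m)"
    using Suc y_def by simp
  also have "\<dots> = ((of_nat (Suc m) + 1) * y - of_nat (Suc m)) / (of_nat (Suc m) * (y - 1) + 1)"
    using d1 d2 by (simp add: field_simps)
  finally show ?case using y_def by simp
qed


lemma dual_val:
  "as \<noteq> [] \<Longrightarrow> \<forall>a\<in>set as. a \<ge> 2 \<Longrightarrow>
    dual as \<noteq> [] \<and> hjcf (dual as) = hjcf as / (hjcf as - 1)"
proof (induction as rule: dual.induct)
  case 1 then show ?case by simp
next
  case (2 a)
  have a: "a \<ge> 2" using 2 by simp
  have r: "replicate (nat (a - 1)) (2::int) = replicate (nat (a - 2)) 2 @ [2]"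
  proof -
    have "nat (a - 1) = Suc (nat (a - 2))" using a by simp
    then show ?thesis by (simp add: replicate_append_same)
  qed
  have m: "(of_nat (nat (a - 2)) :: rat) = of_int a - 2" using a by simp
  have "hjcf (dual [a]) = ((of_nat (nat (a - 2)) + 1) * 2 - of_nat (nat (a - 2))) / (of_nat (nat (a - 2)) * (2 - 1) + 1)"
    using hjcf_rep2[of "[2]" "nat (a - 2)"] r by simp
  also have "\<dots> = of_int a / (of_int a - 1)" unfolding m by (simp add: algebra_simps)
  finally show ?case using r by simp
next
  case (3 a b cs)
  have a: "a \<ge> 2" using 3 by simp
  define x where "x = hjcf (b # cs)"
  have x: "x > 1" using hjcf_gt1[of "b # cs"] 3 x_def by simp
  have IH: "dual (b # cs) \<noteq> []" "hjcf (dual (b # cs)) = x / (x - 1)" using 3 x_def by auto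
  define y where "y = x / (x - 1) + 1"
  have y1: "y \<ge> 1" using x y_def by simp
  have hi: "hjcf (inc_hd (dual (b # cs))) = y" using IH hjcf_inc_hd y_def by simp
  have ne: "inc_hd (dual (b # cs)) \<noteq> []" using IH by (cases "dual (b # cs)") auto
  have m: "(of_nat (nat (a - 2)) :: rat) = of_int a - 2" using a by simp
  have "hjcf (dual (a # b # cs)) = ((of_int a - 2 + 1) * y - (of_int a - 2)) / ((of_int a - 2) * (y - 1) + 1)"
    using hjcf_rep2[OF ne, of "nat (a - 2)"] hi y1 m by simp
  also have "\<dots> = (of_int a - 1 / x) / (of_int a - 1 / x - 1)"
  proof -
    define A where "A = (of_int a :: rat)"
    have A: "A \<ge> 2" using a A_def by simp
    have x0: "x - 1 \<noteq> 0" "x \<noteq> 0" using x by auto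
    have "(A - 1) * x \<ge> 1 * x" using A x by (intro mult_right_mono) auto
    then have "(A - 1) * x - 1 > 0" using x by linarith
    then have d: "(A - 1) * x - 1 \<noteq> 0" by simp
    have l: "(A - 2 + 1) * y - (A - 2) = (A * x - 1) / (x - 1)"
      unfolding y_def using x0 by (simp add: field_simps)
    have l2: "(A - 2) * (y - 1) + 1 = ((A - 1) * x - 1) / (x - 1)"
      unfolding y_def using x0 by (simp add: field_simps)
    have r1: "A - 1 / x = (A * x - 1) / x" using x0 by (simp add: field_simps)
    have r2: "(A * x - 1) / x - 1 = ((A - 1) * x - 1) / x" using x0 by (simp add: field_simps)
    show ?thesis unfolding A_def[symmetric] l l2 r1 r2 using x0 d by simp
  qed
  also have "\<dots> = hjcf (a # b # cs) / (hjcf (a # b # cs) - 1)" using x_def by simp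
  finally show ?case using ne by simp
qed



definition r2 :: "int list \<Rightarrow> nat" where
  "r2 bs = length (takeWhile (\<lambda>x. x = 2) bs)"

definition zb :: "int list \<Rightarrow> rat" where
  "zb bs = (if r2 bs = 0 then 3/4 else if 3 \<in> set bs then of_nat (r2 bs) + 3/4 else of_nat (r2 bs))"

definition fanS :: "nat \<Rightarrow> int list" where
  "fanS m = replicate (m - 1) 2 @ [1]"

definition Inv :: "int list \<Rightarrow> int list \<Rightarrow> bool" where
  "Inv bs ns \<longleftrightarrow> ns = fanS (length ns)
    \<or> (hjcf ns > 1 \<and> zb bs * (hjcf ns - 1) \<le> 1)
    \<or> (0 < hjcf ns \<and> hjcf ns \<le> 1/3)
    \<or> (r2 bs \<ge> 2 \<and> 0 < hjcf ns \<and> hjcf ns * (of_nat (r2 bs) + (if 3 \<in> set bs then 3/4 else 0)) \<le> 1)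
    \<or> ((\<exists>rest. bs = 2 # 3 # rest) \<and> 0 < hjcf ns \<and> hjcf ns \<le> 4/7)"

lemma hjcf_rep_one: "hjcf (replicate m 2 @ [1]) = 1"
  by (induction m) (auto simp: hjcf_cons)

lemma hjcf_fanS: "m \<ge> 1 \<Longrightarrow> hjcf (fanS m) = 1"
  unfolding fanS_def by (simp add: hjcf_rep_one)

lemma fanS_Suc: "m \<ge> 1 \<Longrightarrow> 2 # fanS m = fanS (Suc m)"
  unfolding fanS_def by (cases m) auto

lemma r2_2 [simp]: "r2 (2 # bs) = Suc (r2 bs)" by (simp add: r2_def)
lemma r2_3 [simp]: "r2 (3 # bs) = 0" by (simp add: r2_def)

lemma zb_3 [simp]: "zb (3 # bs) = 3/4" by (simp add: zb_def)

lemma r2_0_hd3: "bs \<noteq> [] \<Longrightarrow> set bs \<subseteq> {2,3} \<Longrightarrow> r2 bs = 0 \<Longrightarrow> \<exists>rest. bs = 3 # rest"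
  by (cases bs) (auto simp: r2_def)

lemma zb_2: "bs \<noteq> [] \<Longrightarrow> set bs \<subseteq> {2,3} \<Longrightarrow> zb (2 # bs) = zb bs + 1"
proof (cases "r2 bs = 0")
  case True
  assume "bs \<noteq> []" "set bs \<subseteq> {2,3}"
  then obtain rest where "bs = 3 # rest" using r2_0_hd3 True by blast
  then show ?thesis by (simp add: zb_def)
next
  case False
  then show ?thesis by (simp add: zb_def)
qed

lemma step:
  assumes I: "Inv bs ns" and S: "set bs \<subseteq> {2,3}" and bne: "bs \<noteq> []" and nne: "ns \<noteq> []"
    and c: "c = 2 \<or> c = 3" and n0: "0 \<le> n" and nc: "n \<le> c" and pos: "hjcf (n # ns) > 0"
    and side: "c = 3 \<Longrightarrow> r2 bs \<ge> 2 \<and> (3 \<notin> set bs \<longrightarrow> r2 bs \<ge> 3)"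
  shows "Inv (c # bs) (n # ns)"
proof -
  define v where "v = hjcf ns"
  have v': "hjcf (n # ns) = of_int n - 1 / v" using nne v_def by (simp add: hjcf_cons)
  have ncases: "n = 0 \<or> n = 1 \<or> n = 2 \<or> n = 3" using n0 nc c by auto
  have zb3: "c = 3 \<Longrightarrow> zb bs \<ge> 2"
  proof -
    assume "c = 3"
    then have s: "r2 bs \<ge> 2" "3 \<notin> set bs \<longrightarrow> r2 bs \<ge> 3" using side by auto
    then have "(of_nat (r2 bs) :: rat) \<ge> 2" by simp
    moreover have "3 \<notin> set bs \<Longrightarrow> (of_nat (r2 bs) :: rat) \<ge> 3" using s by simp
    ultimately show "zb bs \<ge> 2" unfolding zb_def using s by auto
  qed
  consider (F) "ns = fanS (length ns)"
    | (A) "v > 1" "zb bs * (v - 1) \<le> 1"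
    | (D1) "0 < v" "v \<le> 1/3"
    | (D2) "r2 bs \<ge> 2" "0 < v" "v * (of_nat (r2 bs) + (if 3 \<in> set bs then 3/4 else 0)) \<le> 1"
    | (D3) rest where "bs = 2 # 3 # rest" "0 < v" "v \<le> 4/7"
    using I unfolding Inv_def v_def by blast
  then show ?thesis
  proof cases
    case F
    have v1: "v = 1" using F hjcf_fanS nne v_def by (metis length_greater_0_conv less_eq_Suc_le One_nat_def)
    then have "of_int n - 1 > (0::rat)" using pos v' by simp
    then have "n \<ge> 2" by linarith
    then have "n = 2 \<or> (n = 3 \<and> c = 3)" using nc c by auto
    then show ?thesis
    proof
      assume "n = 2"
      then have "n # ns = fanS (length (n # ns))" using F fanS_Suc nne
        by (metis length_Cons length_greater_0_conv less_eq_Suc_le One_nat_def)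
      then show ?thesis unfolding Inv_def by blast
    next
      assume "n = 3 \<and> c = 3"
      then have "hjcf (n # ns) = 2" using v' v1 by simp
      then show ?thesis using \<open>n = 3 \<and> c = 3\<close> unfolding Inv_def by simp
    qed
  next
    case A
    have vp: "v > 0" using A by simp
    have iv: "1 / v < 1" "1 / v > 0" using A by auto
    have zbpos: "zb bs > 0" unfolding zb_def by auto
    from ncases show ?thesis
    proof (elim disjE)
      assume "n = 0" then show ?thesis using pos v' iv by simp
    next
      assume n1: "n = 1"
      then have e: "hjcf (n # ns) = (v - 1) / v" using v' vp by (simp add: field_simps)
      show ?thesis
      proof (cases "c = 3")
        case True
        then have "zb bs \<ge> 2" using zb3 by simp
        then have "2 * (v - 1) \<le> zb bs * (v - 1)" using A by (intro mult_right_mono) auto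
        then have "2 * (v - 1) \<le> 1" using A by linarith
        then have "(v - 1) / v \<le> 1/3" using vp by (simp add: field_simps)
        then show ?thesis using e pos unfolding Inv_def by simp
      next
        case False
        then have c2: "c = 2" using c by simp
        show ?thesis
        proof (cases "r2 bs = 0")
          case True
          then obtain rest where rest: "bs = 3 # rest" using r2_0_hd3 bne S by blast
          then have "3/4 * (v - 1) \<le> 1" using A by simp
          then have "(v - 1) / v \<le> 4/7" using vp by (simp add: field_simps)
          then show ?thesis using e pos c2 rest unfolding Inv_def by simp
        next
          case False
          have zbe: "zb bs = of_nat (r2 bs) + (if 3 \<in> set bs then 3/4 else 0)"
            using False unfolding zb_def by simp
          have "(v - 1) / v * (zb bs + 1) \<le> 1" using A vp by (simp add: field_simps)
          then have "(v - 1) / v * (of_nat (r2 (c # bs)) + (if 3 \<in> set (c # bs) then 3/4 else 0)) \<le> 1"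
            using c2 zbe by (simp add: algebra_simps)
          moreover have "r2 (c # bs) \<ge> 2" using False c2 by simp
          ultimately show ?thesis using e pos unfolding Inv_def by auto
        qed
      qed
    next
      assume n2: "n = 2"
      then have e: "hjcf (n # ns) - 1 = (v - 1) / v" using v' vp by (simp add: field_simps)
      have gt: "hjcf (n # ns) > 1" using n2 v' iv by simp
      show ?thesis
      proof (cases "c = 3")
        case True
        have "3/4 * ((v - 1) / v) \<le> 1" using vp by (simp add: field_simps)
        then have "zb (c # bs) * (hjcf (n # ns) - 1) \<le> 1" using True e by simp
        then show ?thesis using gt unfolding Inv_def by simp
      next
        case False
        then have c2: "c = 2" using c by simp
        have "(zb bs + 1) * ((v - 1) / v) \<le> 1" using A vp by (simp add: field_simps)
        then have "zb (c # bs) * (hjcf (n # ns) - 1) \<le> 1" using c2 e zb_2[OF bne S] by simp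
        then show ?thesis using gt unfolding Inv_def by simp
      qed
    next
      assume n3: "n = 3"
      then have c3: "c = 3" using nc c by auto
      then have "zb bs \<ge> 2" using zb3 by simp
      then have "2 * (v - 1) \<le> zb bs * (v - 1)" using A by (intro mult_right_mono) auto
      then have "2 * (v - 1) \<le> 1" using A by linarith
      then have b: "3/4 * (2 - 1 / v) \<le> 1" using vp by (simp add: field_simps)
      have hv: "hjcf (n # ns) = 3 - 1 / v" using v' n3 by simp
      have g: "hjcf (n # ns) > 1" using hv iv by linarith
      have "zb (c # bs) * (hjcf (n # ns) - 1) = 3/4 * (2 - 1 / v)" using c3 hv by simp
      then have "hjcf (n # ns) > 1 \<and> zb (c # bs) * (hjcf (n # ns) - 1) \<le> 1"
        using b g by simp
      then show ?thesis unfolding Inv_def by blast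
    qed
  next
    case D1
    have "1 / v \<ge> 3" using D1 by (simp add: field_simps)
    moreover have "of_int n \<le> (3::rat)" using nc c by auto
    ultimately show ?thesis using pos v' by linarith
  next
    case D2
    define e :: rat where "e = (if 3 \<in> set bs then 3/4 else 0)"
    have e0: "e \<ge> 0" unfolding e_def by simp
    have iv: "1 / v \<ge> of_nat (r2 bs) + e" using D2 unfolding e_def by (simp add: field_simps)
    have r: "(of_nat (r2 bs) :: rat) \<ge> 2" using D2 by simp
    show ?thesis
    proof (cases "c = 3")
      case False
      then have "of_int n \<le> (2::rat)" using nc c by auto
      then show ?thesis using pos v' iv r e0 by linarith
    next
      case True
      have nn: "of_int n \<le> (3::rat)" using nc True by simp
      show ?thesis
      proof (cases "3 \<in> set bs")
        case False
        then have "(of_nat (r2 bs) :: rat) \<ge> 3" using side True by simp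
        then show ?thesis using pos v' iv e0 nn by linarith
      next
        case h: True
        then have "e = 3/4" unfolding e_def by simp
        then have "hjcf (n # ns) \<le> 1/3" using pos v' iv nn r by linarith
        then show ?thesis using pos unfolding Inv_def by simp
      qed
    qed
  next
    case D3
    then have "c \<noteq> 3" using side by auto
    then have nn: "of_int n \<le> (2::rat)" using nc c by auto
    have "1 / v \<ge> 7/4" using D3 by (simp add: field_simps)
    then have "hjcf (n # ns) \<le> 1/3" using v' nn by linarith
    then show ?thesis using pos unfolding Inv_def by simp
  qed
qed



inductive R :: "int list \<Rightarrow> bool" where
  R_end: "m \<ge> 3 \<Longrightarrow> R (replicate m 2)"
| R_mid: "m \<ge> 2 \<Longrightarrow> R ys \<Longrightarrow> R (replicate m 2 @ 3 # ys)"

lemma r2_rep: "r2 (replicate m 2) = m" by (induction m) (auto simp: r2_def)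
lemma r2_rep3: "r2 (replicate m 2 @ 3 # ys) = m" by (induction m) auto

lemma R_props: "R xs \<Longrightarrow> set xs \<subseteq> {2,3} \<and> xs \<noteq> [] \<and> r2 xs \<ge> 2 \<and> (3 \<notin> set xs \<longrightarrow> r2 xs \<ge> 3)"
  by (induction rule: R.induct) (auto simp: r2_rep r2_rep3)

definition pos :: "int list \<Rightarrow> bool" where
  "pos ns \<longleftrightarrow> (\<forall>i<length ns. 0 < hjcf (drop i ns))"

lemma pos_Cons: "pos (x # xs) \<Longrightarrow> pos xs \<and> 0 < hjcf (x # xs)"
  unfolding pos_def by (metis Suc_less_eq drop0 drop_Suc_Cons length_Cons zero_less_Suc)

lemma pos_append: "pos (xs @ ys) \<Longrightarrow> pos ys"
  by (induction xs) (auto dest: pos_Cons)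

lemma block:
  assumes "Inv bs ns" "set bs \<subseteq> {2,3}" "bs \<noteq> []" "ns \<noteq> []"
  shows "list_all2 (\<lambda>x y. 0 \<le> x \<and> x \<le> y) ms (replicate m 2) \<Longrightarrow> pos (ms @ ns)
    \<Longrightarrow> Inv (replicate m 2 @ bs) (ms @ ns)"
proof (induction ms arbitrary: m)
  case Nil then show ?case using assms by simp
next
  case (Cons x ms)
  obtain m' where m: "m = Suc m'" using Cons.prems by (cases m) auto
  have la: "list_all2 (\<lambda>x y. 0 \<le> x \<and> x \<le> y) ms (replicate m' 2)" "0 \<le> x" "x \<le> 2"
    using Cons.prems m by auto
  have p: "pos (ms @ ns)" "0 < hjcf (x # ms @ ns)" using Cons.prems pos_Cons by auto
  have I: "Inv (replicate m' 2 @ bs) (ms @ ns)" using Cons.IH la p by simp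
  have "Inv (2 # replicate m' 2 @ bs) (x # ms @ ns)"
    by (rule step[OF I]) (use assms la p in auto)
  then show ?case using m by simp
qed

lemma main:
  "R xs \<Longrightarrow> list_all2 (\<lambda>x y. 0 \<le> x \<and> x \<le> y) ns xs \<Longrightarrow> pos ns \<Longrightarrow> Inv xs ns"
proof (induction arbitrary: ns rule: R.induct)
  case (R_end m)
  have rep: "replicate m (2::int) = replicate (m - 1) 2 @ [2]"
    using R_end.hyps by (metis Suc_diff_1 le_trans less_eq_Suc_le one_le_numeral replicate_Suc replicate_append_same zero_less_one)
  obtain ms x where ns: "ns = ms @ [x]" "list_all2 (\<lambda>x y. 0 \<le> x \<and> x \<le> y) ms (replicate (m - 1) 2)"
    "0 \<le> x" "x \<le> 2"
    using R_end.prems(1) unfolding rep by (auto simp: list_all2_append2 list_all2_Cons2)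
  have px: "pos [x]" using pos_append R_end.prems ns by blast
  then have x0: "x > 0" using pos_Cons by fastforce
  have I: "Inv [2] [x]"
  proof (cases "x = 1")
    case True then show ?thesis unfolding Inv_def fanS_def by simp
  next
    case False
    then have "x = 2" using x0 ns by simp
    then show ?thesis unfolding Inv_def zb_def r2_def by simp
  qed
  have "Inv (replicate (m - 1) 2 @ [2]) (ms @ [x])"
    by (rule block[OF I]) (use ns R_end.prems in auto)
  then show ?case using rep ns by simp
next
  case (R_mid m ys)
  obtain ms y ns' where ns: "ns = ms @ y # ns'" "list_all2 (\<lambda>x y. 0 \<le> x \<and> x \<le> y) ms (replicate m 2)"
    "0 \<le> y" "y \<le> 3" "list_all2 (\<lambda>x y. 0 \<le> x \<and> x \<le> y) ns' ys"
    using R_mid.prems(1) by (auto simp: list_all2_append2 list_all2_Cons2)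
  have p: "pos (y # ns')" using pos_append R_mid.prems ns by blast
  then have p2: "pos ns'" "0 < hjcf (y # ns')" using pos_Cons by auto
  have I: "Inv ys ns'" using R_mid.IH ns p2 by simp
  have Rp: "set ys \<subseteq> {2,3}" "ys \<noteq> []" "r2 ys \<ge> 2" "3 \<notin> set ys \<longrightarrow> r2 ys \<ge> 3"
    using R_props[OF R_mid.hyps(2)] by auto
  have nsne: "ns' \<noteq> []" using ns(5) Rp(2) by auto
  have I2: "Inv (3 # ys) (y # ns')"
    by (rule step[OF I]) (use Rp ns p2 nsne in auto)
  have "Inv (replicate m 2 @ 3 # ys) (ms @ y # ns')"
    by (rule block[OF I2]) (use Rp ns R_mid.prems in auto)
  then show ?case using ns by simp
qed



lemma dual_shape:
  "as \<noteq> [] \<Longrightarrow> \<forall>a\<in>set as. a \<ge> 5 \<Longrightarrow> \<exists>ys. dual as = 2 # ys \<and> R ys"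
proof (induction as rule: dual.induct)
  case 1 then show ?case by simp
next
  case (2 a)
  have a: "a \<ge> 5" using 2 by simp
  have "nat (a - 1) = Suc (nat (a - 2))" using a by simp
  then have "dual [a] = 2 # replicate (nat (a - 2)) 2" by simp
  moreover have "R (replicate (nat (a - 2)) 2)" by (rule R_end) (use a in simp)
  ultimately show ?case by blast
next
  case (3 a b cs)
  have a: "a \<ge> 5" using 3 by simp
  obtain ys where ys: "dual (b # cs) = 2 # ys" "R ys" using 3 by auto
  have "nat (a - 2) = Suc (nat (a - 3))" using a by simp
  then have "dual (a # b # cs) = 2 # (replicate (nat (a - 3)) 2 @ 3 # ys)" using ys by simp
  moreover have "R (replicate (nat (a - 3)) 2 @ 3 # ys)" by (rule R_mid) (use a ys in simp_all)
  ultimately show ?case by blast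
qed

lemma one_twos_one_fanS: "m \<ge> 1 \<Longrightarrow> one_twos_one (Suc m) = 1 # fanS m"
  unfolding one_twos_one_def fanS_def
  by (rule nth_equalityI) (auto simp: nth_Cons nth_append split: nat.splits)

lemma drop_fanS: "j < m \<Longrightarrow> drop j (fanS m) = fanS (m - j)"
  unfolding fanS_def by simp

lemma fanS_le2: "x \<in> set (fanS m) \<Longrightarrow> x \<le> 2 \<and> x \<ge> 1"
  unfolding fanS_def by (auto split: if_splits)


theorem lemma2p3:
  fixes p q :: int
  assumes "p > q" and "q \<ge> 1" and "coprime p q"
    and "\<exists>as. as \<noteq> [] \<and> (\<forall>a\<in>set as. a \<ge> 5) \<and> hjcf as = of_int p / of_int q"
  shows "Z_set p q = {one_twos_one (length (hj_b p q))}"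
proof -
  obtain as where as: "as \<noteq> []" "\<forall>a\<in>set as. a \<ge> 5" "hjcf as = of_int p / of_int q"
    using assms(4) by blast
  obtain ys where ys: "dual as = 2 # ys" "R ys" using dual_shape as by blast
  have Rp: "set ys \<subseteq> {2,3}" "ys \<noteq> []" "r2 ys \<ge> 2" "3 \<notin> set ys \<longrightarrow> r2 ys \<ge> 3"
    using R_props[OF ys(2)] by auto
  have as2: "\<forall>a\<in>set as. a \<ge> 2" using as by auto
  have dv: "hjcf (dual as) = hjcf as / (hjcf as - 1)" using dual_val[OF as(1) as2] by simp
  have qpos: "(of_int q :: rat) > 0" using assms by simp
  have pq: "(of_int p :: rat) - of_int q \<noteq> 0" using assms by simp
  have val: "hjcf (dual as) = of_int p / of_int (p - q)"
    unfolding dv as(3) using qpos pq by (simp add: field_simps)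
  have dge: "\<forall>b\<in>set (dual as). b \<ge> 2" using ys Rp by auto
  have hb: "hj_b p q = 2 # ys"
    unfolding hj_b_def
  proof (rule the_equality)
    show "2 # ys \<noteq> [] \<and> (\<forall>b\<in>set (2 # ys). b \<ge> 2) \<and> hjcf (2 # ys) = of_int p / of_int (p - q)"
      using dge val ys by simp
  next
    fix bs assume "bs \<noteq> [] \<and> (\<forall>b\<in>set bs. 2 \<le> b) \<and> hjcf bs = of_int p / of_int (p - q)"
    then show "bs = 2 # ys" using hjcf_unique[of bs "dual as"] dge val ys by auto
  qed
  define k where "k = length ys"
  have k1: "k \<ge> 1" using Rp k_def by (cases ys) auto
  have fan: "one_twos_one (length (hj_b p q)) = 1 # fanS k"
    using hb k_def one_twos_one_fanS k1 by simp
  have fanlen: "length (fanS k) = k" unfolding fanS_def using k1 by simp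
  show ?thesis
  proof
    show "{one_twos_one (length (hj_b p q))} \<subseteq> Z_set p q"
    proof -
      have l: "length (1 # fanS k) = length (hj_b p q)" using hb fanlen k_def by simp
      have nn: "\<forall>n\<in>set (1 # fanS k). n \<ge> 0" using fanS_le2 by fastforce
      have ad: "admissible (1 # fanS k)"
        unfolding admissible_def
      proof (intro allI impI)
        fix i assume i: "1 \<le> i \<and> i < length (1 # fanS k)"
        then obtain j where j: "i = Suc j" "j < k" using fanlen by (cases i) auto
        have "drop i (1 # fanS k) = fanS (k - j)" using j drop_fanS by simp
        then show "0 < hjcf (drop i (1 # fanS k))" using hjcf_fanS j by simp
      qed
      have h0: "hjcf (1 # fanS k) = 0"
        using hjcf_fanS k1 fanlen by (subst hjcf_cons) (auto simp: fanS_def)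
      have bd: "\<forall>i<length (1 # fanS k). (1 # fanS k) ! i \<le> hj_b p q ! i"
      proof (intro allI impI)
        fix i assume i: "i < length (1 # fanS k)"
        have "(1 # fanS k) ! i \<le> 2" using fanS_le2 i nth_mem[OF i] by fastforce
        moreover have "hj_b p q ! i \<ge> 2" using hb dge ys i l nth_mem[of i "hj_b p q"] by auto
        ultimately show "(1 # fanS k) ! i \<le> hj_b p q ! i" by simp
      qed
      show ?thesis unfolding Z_set_def fan using l nn ad h0 bd by simp
    qed
  next
    show "Z_set p q \<subseteq> {one_twos_one (length (hj_b p q))}"
    proof
      fix n assume "n \<in> Z_set p q"
      then have n: "length n = length (2 # ys)" "\<forall>x\<in>set n. x \<ge> 0" "admissible n" "hjcf n = 0"
        "\<forall>i<length n. n ! i \<le> (2 # ys) ! i"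
        unfolding Z_set_def hb by auto
      obtain n0 ns where nd: "n = n0 # ns" using n(1) by (cases n) auto
      have ln: "length ns = length ys" using n(1) nd by simp
      have nsne: "ns \<noteq> []" using ln Rp by auto
      have n0: "0 \<le> n0" "n0 \<le> 2" using n nd by (auto dest: spec[of _ 0])
      have la: "list_all2 (\<lambda>x y. 0 \<le> x \<and> x \<le> y) ns ys"
      proof (rule list_all2_all_nthI[OF ln])
        fix i assume i: "i < length ns"
        have "Suc i < length n" using i nd by simp
        then have "n ! Suc i \<le> (2 # ys) ! Suc i" using n(5) by blast
        moreover have "ns ! i \<in> set n" using i nd by simp
        ultimately show "0 \<le> ns ! i \<and> ns ! i \<le> ys ! i" using n(2) nd by auto
      qed
      have ps: "pos ns"
        unfolding pos_def
      proof (intro allI impI)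
        fix i assume "i < length ns"
        then have "0 < hjcf (drop (Suc i) n)" using n(3) nd unfolding admissible_def by auto
        then show "0 < hjcf (drop i ns)" using nd by simp
      qed
      have I: "Inv ys ns" using main[OF ys(2) la ps] .
      define v where "v = hjcf ns"
      have vp: "v > 0" using ps nsne unfolding pos_def v_def by (metis drop0 length_greater_0_conv)
      have e: "of_int n0 = 1 / v" using n(4) nd nsne v_def by (simp add: hjcf_cons)
      consider (F) "ns = fanS (length ns)"
        | (A) "v > 1"
        | (D1) "v \<le> 1/3"
        | (D2) "r2 ys \<ge> 2" "v * (of_nat (r2 ys) + (if 3 \<in> set ys then 3/4 else 0)) \<le> 1"
        | (D3) rest where "ys = 2 # 3 # rest"
        using I unfolding Inv_def v_def by blast
      then show "n \<in> {one_twos_one (length (hj_b p q))}"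
      proof cases
        case F
        then have "v = 1" using hjcf_fanS ln k1 k_def v_def by (metis)
        then have "n0 = 1" using e by simp
        then show ?thesis using nd F fan ln k_def by simp
      next
        case A
        then have "1 / v < 1" "1 / v > 0" by auto
        then have "n0 < 1" "n0 > 0" using e by (metis of_int_less_1_iff, metis of_int_0_less_iff)
        then show ?thesis by simp
      next
        case D1
        then have "1 / v \<ge> 3" using vp by (simp add: field_simps)
        then have "(of_int n0 :: rat) \<ge> 3" using e by simp
        then show ?thesis using n0 by simp
      next
        case D2
        have "1 / v \<ge> of_nat (r2 ys) + (if 3 \<in> set ys then 3/4 else 0)" using D2 vp by (simp add: field_simps)
        moreover have "of_nat (r2 ys) + (if 3 \<in> set ys then 3/4 else 0) > (2::rat)"
          using Rp by auto
        ultimately have "(of_int n0 :: rat) > 2" using e by simp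
        then show ?thesis using n0 by simp
      next
        case D3
        then show ?thesis using Rp by simp
      qed
    qed
  qed
qed


end
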